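(* Let $P$ be a defining matrix as in the context. Then $\gcd(M(P))=\gcd(M'(P))$.
   Context: Fix integers $r\ge1$, $n_0,\dots,n_r\ge1$, vectors $l_i=(l_{i1},\dots,l_{in_i})\in\mathbb{Z}_{\ge1}^{n_i}$, $d_i\in\mathbb{Z}^{n_i}$ with $\gcd(l_{ij},d_{ij})=1$ and $d_{i1}/l_{i1}>\dots>d_{in_i}/l_{in_i}$. With $e_1,\dots,e_{r+1}$ the standard basis of $\mathbb{Z}^{r+1}$, $u=e_{r+1}$, $e_0=-(e_1+\dots+e_r)$, let $v_{ij}=l_{ij}e_i+d_{ij}u$. $P$ is the integral matrix with columns $v_{ij}$ ($0\le i\le r$, $1\le j\le n_i$) in type (ee), these together with $u$ in type (pe), with $-u$ in type (ep), with $u$ and $-u$ in type (pp); $P$ is a defining matrix if its columns generate $\mathbb{Q}^{r+1}$ as a convex cone. $M(P)$ is the set of absolute values of all $(r+1)\times(r+1)$ minors of $P$ (formed from sets of $r+1$ distinct columns). Set $\mu(j_0,\dots,j_r)=\sum_{i_0=0}^rd_{i_0j_{i_0}}\prod_{i\ne i_0}l_{ij_i}$, $\hat\mu=\mu(n_0,\dots,n_r)$, $\hat\nu(i,j)=l_{ij}d_{in_i}-l_{in_i}d_{ij}$. In type (ee), $M'(P)=\{|\hat\mu|\}\cup\{|\hat\nu(i_0,j_{i_0})|\prod_{i\ne i_0,i_1}l_{ij_i}\ ;\ 0\le i_0,i_1\le r,\ i_0\ne i_1,\ 1\le j_i\le n_i\text{ for all }i\ne i_1\}$; in types (pe),(ep),(pp),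 $M'(P)=\{\prod_{i\ne i_1}l_{ij_i}\ ;\ 0\le i_1\le r,\ 1\le j_i\le n_i\text{ for all }i\ne i_1\}$. *)

theory Defs
  imports Main "Jordan_Normal_Form.Determinant"
begin

text \<open>Vectors of Z^(r+1) are functions nat => int on coordinates 1..r+1;
  coordinate k corresponds to e_k, coordinate r+1 to u.\<close>

datatype ptype = EE | PE | EP | PP

text \<open>Column labels: V i j is the column v_ij, Up is u, Down is -u.\<close>
datatype col = V nat nat | Up | Down

definition basis_e :: "nat \<Rightarrow> nat \<Rightarrow> nat \<Rightarrow> int" where
  "basis_e r i k = (if i = 0 then (if 1 \<le> k \<and> k \<le> r then -1 else 0)
                    else (if k = i then 1 else 0))"

definition uvec :: "nat \<Rightarrow> nat \<Rightarrow> int" where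
  "uvec r k = (if k = r + 1 then 1 else 0)"

definition colvec :: "nat \<Rightarrow> (nat \<Rightarrow> nat \<Rightarrow> int) \<Rightarrow> (nat \<Rightarrow> nat \<Rightarrow> int) \<Rightarrow> col \<Rightarrow> nat \<Rightarrow> int" where
  "colvec r l d c k = (case c of
      V i j \<Rightarrow> l i j * basis_e r i k + d i j * uvec r k
    | Up \<Rightarrow> uvec r k
    | Down \<Rightarrow> - uvec r k)"

definition vcols :: "nat \<Rightarrow> (nat \<Rightarrow> nat) \<Rightarrow> col set" where
  "vcols r n = {V i j | i j. i \<le> r \<and> 1 \<le> j \<and> j \<le> n i}"

definition cols :: "ptype \<Rightarrow> nat \<Rightarrow> (nat \<Rightarrow> nat) \<Rightarrow> col set" where
  "cols t r n = (case t of
      EE \<Rightarrow> vcols r n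
    | PE \<Rightarrow> vcols r n \<union> {Up}
    | EP \<Rightarrow> vcols r n \<union> {Down}
    | PP \<Rightarrow> vcols r n \<union> {Up, Down})"

definition valid_data :: "nat \<Rightarrow> (nat \<Rightarrow> nat) \<Rightarrow> (nat \<Rightarrow> nat \<Rightarrow> int) \<Rightarrow> (nat \<Rightarrow> nat \<Rightarrow> int) \<Rightarrow> bool" where
  "valid_data r n l d \<longleftrightarrow> r \<ge> 1 \<and>
     (\<forall>i\<le>r. n i \<ge> 1) \<and>
     (\<forall>i\<le>r. \<forall>j. 1 \<le> j \<and> j \<le> n i \<longrightarrow> l i j \<ge> 1 \<and> gcd (l i j) (d i j) = 1) \<and>
     (\<forall>i\<le>r. \<forall>j j'. 1 \<le> j \<and> j < j' \<and> j' \<le> n i \<longrightarrow>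
        (of_int (d i j) / of_int (l i j) :: rat) > of_int (d i j') / of_int (l i j'))"

definition defining_matrix :: "ptype \<Rightarrow> nat \<Rightarrow> (nat \<Rightarrow> nat) \<Rightarrow> (nat \<Rightarrow> nat \<Rightarrow> int) \<Rightarrow> (nat \<Rightarrow> nat \<Rightarrow> int) \<Rightarrow> bool" where
  "defining_matrix t r n l d \<longleftrightarrow>
     (\<forall>x :: nat \<Rightarrow> rat. \<exists>c :: col \<Rightarrow> rat. (\<forall>k\<in>cols t r n. c k \<ge> 0) \<and>
        (\<forall>i\<in>{1..r+1}. x i = (\<Sum>k\<in>cols t r n. c k * of_int (colvec r l d k i))))"

definition minors_abs :: "ptype \<Rightarrow> nat \<Rightarrow> (nat \<Rightarrow> nat) \<Rightarrow> (nat \<Rightarrow> nat \<Rightarrow> int) \<Rightarrow> (nat \<Rightarrow> nat \<Rightarrow> int) \<Rightarrow> int set" where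
  "minors_abs t r n l d =
     {\<bar>det (mat (r+1) (r+1) (\<lambda>(a, b). colvec r l d (f b) (a + 1)))\<bar> | f.
        f ` {0..<r+1} \<subseteq> cols t r n \<and> inj_on f {0..<r+1}}"

definition mu_hat :: "nat \<Rightarrow> (nat \<Rightarrow> nat) \<Rightarrow> (nat \<Rightarrow> nat \<Rightarrow> int) \<Rightarrow> (nat \<Rightarrow> nat \<Rightarrow> int) \<Rightarrow> int" where
  "mu_hat r n l d = (\<Sum>i0\<in>{0..r}. d i0 (n i0) * (\<Prod>i\<in>{0..r} - {i0}. l i (n i)))"

definition nu_hat :: "(nat \<Rightarrow> nat) \<Rightarrow> (nat \<Rightarrow> nat \<Rightarrow> int) \<Rightarrow> (nat \<Rightarrow> nat \<Rightarrow> int) \<Rightarrow> nat \<Rightarrow> nat \<Rightarrow> int" where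
  "nu_hat n l d i j = l i j * d i (n i) - l i (n i) * d i j"

definition M'_set :: "ptype \<Rightarrow> nat \<Rightarrow> (nat \<Rightarrow> nat) \<Rightarrow> (nat \<Rightarrow> nat \<Rightarrow> int) \<Rightarrow> (nat \<Rightarrow> nat \<Rightarrow> int) \<Rightarrow> int set" where
  "M'_set t r n l d = (if t = EE then
      {\<bar>mu_hat r n l d\<bar>} \<union>
      {\<bar>nu_hat n l d i0 (j i0)\<bar> * (\<Prod>i\<in>{0..r} - {i0, i1}. l i (j i)) | i0 i1 j.
         i0 \<le> r \<and> i1 \<le> r \<and> i0 \<noteq> i1 \<and> (\<forall>i\<in>{0..r} - {i1}. 1 \<le> j i \<and> j i \<le> n i)}
    else
      {(\<Prod>i\<in>{0..r} - {i1}. l i (j i)) | i1 j.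
         i1 \<le> r \<and> (\<forall>i\<in>{0..r} - {i1}. 1 \<le> j i \<and> j i \<le> n i)})"

end

theory Submission
  imports Defs
begin


definition topm :: "nat \<Rightarrow> (nat \<Rightarrow> nat) \<Rightarrow> (nat \<Rightarrow> int) \<Rightarrow> nat \<Rightarrow> nat \<Rightarrow> int" where
  "topm r kf lcf a b = lcf b * basis_e r (kf b) (Suc a)"

definition Mt :: "nat \<Rightarrow> (nat \<Rightarrow> nat) \<Rightarrow> (nat \<Rightarrow> int) \<Rightarrow> (nat \<Rightarrow> int) \<Rightarrow> int mat" where
  "Mt r kf lcf y = mat (Suc r) (Suc r) (\<lambda>(a,b). if a < r then topm r kf lcf a b else y b)"

definition dl :: "nat \<Rightarrow> nat \<Rightarrow> int" where "dl b c = (if c = b then 1 else 0)"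

definition Cf :: "nat \<Rightarrow> (nat \<Rightarrow> nat) \<Rightarrow> (nat \<Rightarrow> int) \<Rightarrow> nat \<Rightarrow> int" where
  "Cf r kf lcf b = det (Mt r kf lcf (dl b))"

lemma Mt_carrier[simp]: "Mt r kf lcf y \<in> carrier_mat (Suc r) (Suc r)"
  by (simp add: Mt_def)

lemma cof_indep: "cofactor (Mt r kf lcf y) r b = cofactor (Mt r kf lcf z) r b"
proof -
  have "mat_delete (Mt r kf lcf y) r b = mat_delete (Mt r kf lcf z) r b"
    by (rule eq_matI) (auto simp: mat_delete_def Mt_def)
  thus ?thesis by (simp add: cofactor_def)
qed

lemma det_Mt_cof: "det (Mt r kf lcf y) = (\<Sum>b<Suc r. y b * cofactor (Mt r kf lcf z) r b)"
proof -
  have "det (Mt r kf lcf y) = (\<Sum>b<Suc r. Mt r kf lcf y $$ (r,b) * cofactor (Mt r kf lcf y) r b)"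
    by (rule laplace_expansion_row) auto
  also have "\<dots> = (\<Sum>b<Suc r. y b * cofactor (Mt r kf lcf z) r b)"
  proof (rule sum.cong[OF refl])
    fix b assume "b \<in> {..<Suc r}"
    then have "Mt r kf lcf y $$ (r,b) = y b" by (simp add: Mt_def)
    then show "Mt r kf lcf y $$ (r,b) * cofactor (Mt r kf lcf y) r b = y b * cofactor (Mt r kf lcf z) r b"
      using cof_indep[of r kf lcf y b z] by simp
  qed
  finally show ?thesis .
qed

lemma sum_dl: "b < n \<Longrightarrow> (\<Sum>c<n. dl b c * X c) = X b"
proof -
  assume b: "b < n"
  have "(\<lambda>c. dl b c * X c) = (\<lambda>c. if c = b then X c else 0)" by (auto simp: dl_def)
  have "(\<Sum>c<n. dl b c * X c) = (\<Sum>c<n. if c = b then X c else 0)" by (rule sum.cong) (auto simp: dl_def)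
  also have "\<dots> = X b" using b by simp
  finally show ?thesis .
qed

lemma Cf_cof: "b < Suc r \<Longrightarrow> Cf r kf lcf b = cofactor (Mt r kf lcf z) r b"
  unfolding Cf_def det_Mt_cof[of _ _ _ _ z] by (rule sum_dl)

lemma det_Mt: "det (Mt r kf lcf y) = (\<Sum>b<Suc r. y b * Cf r kf lcf b)"
  unfolding det_Mt_cof[of _ _ _ _ y] by (rule sum.cong) (auto simp: Cf_cof[of _ r kf lcf y])

lemma det_Mt_zero:
  assumes "b0 < Suc r" "v b0 \<noteq> 0"
    and "\<And>a. a < r \<Longrightarrow> (\<Sum>b<Suc r. topm r kf lcf a b * v b) = 0"
    and "(\<Sum>b<Suc r. y b * v b) = 0"
  shows "det (Mt r kf lcf y) = 0"
proof -
  let ?v = "vec (Suc r) v"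
  have "?v \<noteq> 0\<^sub>v (Suc r)" using assms(1,2) by (metis index_vec index_zero_vec(1))
  moreover have "Mt r kf lcf y *\<^sub>v ?v = 0\<^sub>v (Suc r)"
  proof (rule eq_vecI)
    fix i assume i: "i < dim_vec (0\<^sub>v (Suc r) :: int vec)"
    have "(Mt r kf lcf y *\<^sub>v ?v) $ i = (\<Sum>b<Suc r. (if i < r then topm r kf lcf i b else y b) * v b)"
      using i by (simp add: Mt_def scalar_prod_def atLeast0LessThan)
    also have "\<dots> = 0" using assms(3,4) by (cases "i < r") auto
    finally show "(Mt r kf lcf y *\<^sub>v ?v) $ i = 0\<^sub>v (Suc r) $ i" using i by simp
  qed (auto simp: Mt_def)
  ultimately show ?thesis
    using det_0_iff_vec_prod_zero[OF Mt_carrier[of r kf lcf y]] vec_carrier by blast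
qed

definition Bm :: "nat \<Rightarrow> (nat \<Rightarrow> nat) \<Rightarrow> (nat \<Rightarrow> int) \<Rightarrow> nat \<Rightarrow> int mat" where
  "Bm r kf lcf b = mat (Suc r) (Suc r) (\<lambda>(a,c). if a < r then (if c = b then topm r kf lcf a b
      else basis_e r (kf c) (Suc a)) else dl b c)"

definition Dm :: "nat \<Rightarrow> (nat \<Rightarrow> int) \<Rightarrow> nat \<Rightarrow> int mat" where
  "Dm r lcf b = mat (Suc r) (Suc r) (\<lambda>(a,c). if a = c then (if c = b then 1 else lcf c) else 0)"

definition Lp :: "nat \<Rightarrow> (nat \<Rightarrow> int) \<Rightarrow> nat \<Rightarrow> int" where
  "Lp r lcf b = (\<Prod>c\<in>{0..<Suc r}-{b}. lcf c)"

definition cc :: "nat \<Rightarrow> (nat \<Rightarrow> nat) \<Rightarrow> (nat \<Rightarrow> int) \<Rightarrow> nat \<Rightarrow> int" where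
  "cc r kf lcf b = det (Bm r kf lcf b)"

definition Emat :: "nat \<Rightarrow> (nat \<Rightarrow> nat) \<Rightarrow> int mat" where
  "Emat r kf = mat r r (\<lambda>(a,c). basis_e r (kf c) (Suc a))"

lemma Mt_BD: "b < Suc r \<Longrightarrow> Mt r kf lcf (dl b) = Bm r kf lcf b * Dm r lcf b"
proof (rule eq_matI)
  fix i j assume b: "b < Suc r" and i: "i < dim_row (Bm r kf lcf b * Dm r lcf b)"
    and j: "j < dim_col (Bm r kf lcf b * Dm r lcf b)"
  have i': "i < Suc r" and j': "j < Suc r" using i j by (auto simp: Bm_def Dm_def)
  have "(Bm r kf lcf b * Dm r lcf b) $$ (i,j) = (\<Sum>x\<in>{0..<Suc r}. Bm r kf lcf b $$ (i,x) * Dm r lcf b $$ (x,j))"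
    using i' j' by (simp add: Bm_def Dm_def scalar_prod_def)
  also have "\<dots> = (\<Sum>x\<in>{0..<Suc r}. if x = j then Bm r kf lcf b $$ (i,j) * Dm r lcf b $$ (j,j) else 0)"
  proof (rule sum.cong[OF refl])
    fix x assume "x \<in> {0..<Suc r}"
    then show "Bm r kf lcf b $$ (i,x) * Dm r lcf b $$ (x,j) = (if x = j then Bm r kf lcf b $$ (i,j) * Dm r lcf b $$ (j,j) else 0)"
      using j' by (cases "x = j") (simp_all add: Dm_def)
  qed
  also have "\<dots> = Bm r kf lcf b $$ (i,j) * Dm r lcf b $$ (j,j)" using j' by simp
  also have "\<dots> = Mt r kf lcf (dl b) $$ (i,j)"
    using i' j' by (simp add: Bm_def Dm_def Mt_def topm_def dl_def)
  finally show "Mt r kf lcf (dl b) $$ (i,j) = (Bm r kf lcf b * Dm r lcf b) $$ (i,j)" by (rule sym)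
qed (auto simp: Mt_def Bm_def Dm_def)

lemma det_Dm: "b < Suc r \<Longrightarrow> det (Dm r lcf b) = Lp r lcf b"
proof -
  assume b: "b < Suc r"
  have ut: "upper_triangular (Dm r lcf b)" by (auto simp: upper_triangular_def Dm_def)
  have c: "Dm r lcf b \<in> carrier_mat (Suc r) (Suc r)" by (simp add: Dm_def)
  have "det (Dm r lcf b) = prod_list (diag_mat (Dm r lcf b))"
    by (rule det_upper_triangular[OF ut c])
  also have "\<dots> = prod_list (map (\<lambda>i. Dm r lcf b $$ (i,i)) [0..<Suc r])"
    unfolding diag_mat_def by (simp add: Dm_def)
  also have "\<dots> = (\<Prod>i\<in>{0..<Suc r}. Dm r lcf b $$ (i,i))"
    using prod.distinct_set_conv_list[OF distinct_upt[of 0 "Suc r"], of "\<lambda>i. Dm r lcf b $$ (i,i)"]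
    unfolding set_upt by (rule sym)
  also have "\<dots> = (\<Prod>i\<in>{0..<Suc r}. if i = b then 1 else lcf i)"
    by (rule prod.cong[OF refl]) (simp add: Dm_def)
  also have "\<dots> = (\<Prod>i\<in>{0..<Suc r}-{b}. lcf i)"
    using b by (subst prod.remove[of _ b]) auto
  finally show ?thesis unfolding Lp_def .
qed

lemma Cf_fact: "b < Suc r \<Longrightarrow> Cf r kf lcf b = cc r kf lcf b * Lp r lcf b"
proof -
  assume b: "b < Suc r"
  have "Bm r kf lcf b \<in> carrier_mat (Suc r) (Suc r)" "Dm r lcf b \<in> carrier_mat (Suc r) (Suc r)"
    by (auto simp: Bm_def Dm_def)
  from det_mult[OF this] show ?thesis
    unfolding Cf_def cc_def Mt_BD[OF b] det_Dm[OF b] .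
qed

lemma cc_last: "cc r kf lcf r = det (Emat r kf)"
proof -
  have "cc r kf lcf r = (\<Sum>j<Suc r. Bm r kf lcf r $$ (r,j) * cofactor (Bm r kf lcf r) r j)"
    unfolding cc_def by (rule laplace_expansion_row) (auto simp: Bm_def)
  also have "\<dots> = (\<Sum>j<Suc r. dl r j * cofactor (Bm r kf lcf r) r j)"
    by (rule sum.cong) (auto simp: Bm_def)
  also have "\<dots> = cofactor (Bm r kf lcf r) r r" by (rule sum_dl) simp
  also have "mat_delete (Bm r kf lcf r) r r = Emat r kf"
    by (rule eq_matI) (auto simp: mat_delete_def Bm_def Emat_def)
  then have "cofactor (Bm r kf lcf r) r r = det (Emat r kf)"
    by (simp add: cofactor_def)
  finally show ?thesis .
qed

lemma sum_two:
  fixes n :: nat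
  assumes "b1 \<noteq> b2" "b1 < n" "b2 < n" "\<And>c. c < n \<Longrightarrow> c \<noteq> b1 \<Longrightarrow> c \<noteq> b2 \<Longrightarrow> G c = 0"
  shows "(\<Sum>c<n. G c) = G b1 + G b2"
proof -
  have "(\<Sum>c<n. G c) = G b1 + (\<Sum>c\<in>{..<n}-{b1}. G c)"
    using assms by (subst sum.remove[of _ b1]) auto
  also have "(\<Sum>c\<in>{..<n}-{b1}. G c) = G b2 + (\<Sum>c\<in>{..<n}-{b1}-{b2}. G c)"
    using assms by (subst sum.remove[of _ b2]) auto
  also have "(\<Sum>c\<in>{..<n}-{b1}-{b2}. G c) = 0"
    using assms by (intro sum.neutral) auto
  finally show ?thesis by simp
qed

lemma Lp_zero: "c < Suc r \<Longrightarrow> c \<noteq> b \<Longrightarrow> lcf c = 0 \<Longrightarrow> Lp r lcf b = 0"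
  unfolding Lp_def by (rule prod_zero) auto

lemma Lp_nonzero: "(\<And>c. c < Suc r \<Longrightarrow> lcf c \<noteq> 0) \<Longrightarrow> Lp r lcf b \<noteq> 0"
  unfolding Lp_def by (subst prod_zero_iff) auto

lemma Cf_zero_dup:
  assumes "b1 \<noteq> b2" "b1 \<noteq> b" "b2 \<noteq> b" "b1 < Suc r" "b2 < Suc r" "b < Suc r" "kf b1 = kf b2"
  shows "Cf r kf lcf b = 0"
proof (cases "lcf b1 = 0 \<or> lcf b2 = 0")
  case True
  then have "Lp r lcf b = 0" using assms Lp_zero by metis
  then show ?thesis using Cf_fact[OF assms(6)] by simp
next
  case False
  let ?v = "\<lambda>c. if c = b1 then lcf b2 else if c = b2 then - lcf b1 else (0::int)"
  show ?thesis unfolding Cf_def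
  proof (rule det_Mt_zero[of b1 _ ?v])
    show "b1 < Suc r" "?v b1 \<noteq> 0" using assms False by auto
  next
    fix a assume "a < r"
    have "(\<Sum>c<Suc r. topm r kf lcf a c * ?v c) = topm r kf lcf a b1 * ?v b1 + topm r kf lcf a b2 * ?v b2"
      by (rule sum_two) (use assms in auto)
    also have "\<dots> = 0" using assms by (simp add: topm_def)
    finally show "(\<Sum>c<Suc r. topm r kf lcf a c * ?v c) = 0" .
  next
    show "(\<Sum>c<Suc r. dl b c * ?v c) = 0" using assms by (subst sum_dl) auto
  qed
qed

lemma Cf_pair:
  assumes "b1 \<noteq> b2" "b1 < Suc r" "b2 < Suc r" "kf b1 = kf b2"
  shows "lcf b1 * Cf r kf lcf b1 + lcf b2 * Cf r kf lcf b2 = 0"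
proof (cases "lcf b1 = 0 \<and> lcf b2 = 0")
  case True then show ?thesis by simp
next
  case False
  let ?y = "\<lambda>c. if c = b1 then lcf b1 else if c = b2 then lcf b2 else (0::int)"
  let ?v = "\<lambda>c. if c = b1 then lcf b2 else if c = b2 then - lcf b1 else (0::int)"
  have "det (Mt r kf lcf ?y) = (\<Sum>c<Suc r. ?y c * Cf r kf lcf c)" by (rule det_Mt)
  also have "\<dots> = ?y b1 * Cf r kf lcf b1 + ?y b2 * Cf r kf lcf b2"
    by (rule sum_two) (use assms in auto)
  finally have e: "det (Mt r kf lcf ?y) = lcf b1 * Cf r kf lcf b1 + lcf b2 * Cf r kf lcf b2"
    using assms by simp
  obtain b0 where b0: "b0 < Suc r" "?v b0 \<noteq> 0"
    using False assms by (metis neg_equal_0_iff_equal)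
  have "det (Mt r kf lcf ?y) = 0"
  proof (rule det_Mt_zero[of b0 _ ?v, OF b0])
    fix a assume "a < r"
    have "(\<Sum>c<Suc r. topm r kf lcf a c * ?v c) = topm r kf lcf a b1 * ?v b1 + topm r kf lcf a b2 * ?v b2"
      by (rule sum_two) (use assms in auto)
    also have "\<dots> = 0" using assms by (simp add: topm_def)
    finally show "(\<Sum>c<Suc r. topm r kf lcf a c * ?v c) = 0" .
  next
    have "(\<Sum>c<Suc r. ?y c * ?v c) = ?y b1 * ?v b1 + ?y b2 * ?v b2"
      by (rule sum_two) (use assms in auto)
    also have "\<dots> = 0" using assms by simp
    finally show "(\<Sum>c<Suc r. ?y c * ?v c) = 0" .
  qed
  with e show ?thesis by simp
qed

lemma det_caseii:
  assumes "b1 \<noteq> b2" "b1 < Suc r" "b2 < Suc r" "kf b1 = kf b2"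
    and nz: "\<And>c. c < Suc r \<Longrightarrow> lcf c \<noteq> 0"
  shows "det (Mt r kf lcf y) = cc r kf lcf b1 * (\<Prod>c\<in>{0..<Suc r}-{b1,b2}. lcf c) *
     (y b1 * lcf b2 - y b2 * lcf b1)"
proof -
  let ?R = "\<Prod>c\<in>{0..<Suc r}-{b1,b2}. lcf c"
  have L1: "Lp r lcf b1 = lcf b2 * ?R"
  proof -
    have "Lp r lcf b1 = lcf b2 * (\<Prod>c\<in>{0..<Suc r}-{b1}-{b2}. lcf c)"
      unfolding Lp_def using assms by (subst prod.remove[of _ b2]) auto
    also have "{0..<Suc r}-{b1}-{b2} = {0..<Suc r}-{b1,b2}" by auto
    finally show ?thesis .
  qed
  have L2: "Lp r lcf b2 = lcf b1 * ?R"
  proof -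
    have "Lp r lcf b2 = lcf b1 * (\<Prod>c\<in>{0..<Suc r}-{b2}-{b1}. lcf c)"
      unfolding Lp_def using assms by (subst prod.remove[of _ b1]) auto
    also have "{0..<Suc r}-{b2}-{b1} = {0..<Suc r}-{b1,b2}" by auto
    finally show ?thesis .
  qed
  have C1: "Cf r kf lcf b1 = cc r kf lcf b1 * lcf b2 * ?R" using Cf_fact[OF assms(2)] L1 by simp
  have "lcf b2 * Cf r kf lcf b2 = lcf b2 * (- lcf b1 * cc r kf lcf b1 * ?R)"
    using Cf_pair[OF assms(1-4), of lcf] C1 by (simp add: algebra_simps)
  then have C2: "Cf r kf lcf b2 = - lcf b1 * cc r kf lcf b1 * ?R"
    using mult_left_cancel[OF nz[OF assms(3)]] by blast
  have "det (Mt r kf lcf y) = (\<Sum>c<Suc r. y c * Cf r kf lcf c)" by (rule det_Mt)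
  also have "\<dots> = y b1 * Cf r kf lcf b1 + y b2 * Cf r kf lcf b2"
    by (rule sum_two) (use assms Cf_zero_dup in auto)
  also have "\<dots> = cc r kf lcf b1 * ?R * (y b1 * lcf b2 - y b2 * lcf b1)"
    unfolding C1 C2 by (simp add: algebra_simps)
  finally show ?thesis .
qed

lemma basis_sum: "a < r \<Longrightarrow> (\<Sum>i\<in>{0..r}. basis_e r i (Suc a)) = 0"
proof -
  assume a: "a < r"
  have "{0..r} = insert 0 {1..r}" by auto
  then have "(\<Sum>i\<in>{0..r}. basis_e r i (Suc a)) = basis_e r 0 (Suc a) + (\<Sum>i\<in>{1..r}. basis_e r i (Suc a))"
    by simp
  also have "(\<Sum>i\<in>{1..r}. basis_e r i (Suc a)) = (\<Sum>i\<in>{1..r}. if i = Suc a then 1 else 0)"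
    by (rule sum.cong) (auto simp: basis_e_def)
  also have "\<dots> = 1" using a by simp
  finally show ?thesis using a by (simp add: basis_e_def)
qed

lemma det_casei:
  assumes bij: "bij_betw kf {0..<Suc r} {0..r}"
    and nz: "\<And>c. c < Suc r \<Longrightarrow> lcf c \<noteq> 0"
  shows "det (Mt r kf lcf y) = cc r kf lcf r * (\<Sum>b<Suc r. y b * Lp r lcf b)"
proof -
  let ?P = "\<Prod>c\<in>{0..<Suc r}. lcf c"
  have lP: "lcf c * Lp r lcf c = ?P" if "c < Suc r" for c
    unfolding Lp_def using that by (subst prod.remove[of _ c]) auto
  have Lnz: "Lp r lcf b \<noteq> 0" for b using Lp_nonzero nz by blast
  have ccr: "cc r kf lcf b = cc r kf lcf r" if b: "b < Suc r" for b
  proof (cases "b = r")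
    case True then show ?thesis by simp
  next
    case False
    let ?y = "\<lambda>c. if c = b then Lp r lcf r else if c = r then - Lp r lcf b else 0"
    have "det (Mt r kf lcf ?y) = (\<Sum>c<Suc r. ?y c * Cf r kf lcf c)" by (rule det_Mt)
    also have "\<dots> = ?y b * Cf r kf lcf b + ?y r * Cf r kf lcf r"
      by (rule sum_two) (use False b in auto)
    finally have e: "det (Mt r kf lcf ?y) = Lp r lcf r * Cf r kf lcf b - Lp r lcf b * Cf r kf lcf r"
      using False by simp
    have "det (Mt r kf lcf ?y) = 0"
    proof (rule det_Mt_zero[of 0 _ "Lp r lcf"])
      show "0 < Suc r" "Lp r lcf 0 \<noteq> 0" using Lnz by auto
    next
      fix a assume a: "a < r"
      have "(\<Sum>c<Suc r. topm r kf lcf a c * Lp r lcf c) = (\<Sum>c<Suc r. ?P * basis_e r (kf c) (Suc a))"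
      proof (rule sum.cong[OF refl])
        fix c assume "c \<in> {..<Suc r}"
        then have "lcf c * Lp r lcf c = ?P" using lP by simp
        moreover have "topm r kf lcf a c * Lp r lcf c = (lcf c * Lp r lcf c) * basis_e r (kf c) (Suc a)"
          by (simp add: topm_def algebra_simps)
        ultimately show "topm r kf lcf a c * Lp r lcf c = ?P * basis_e r (kf c) (Suc a)" by simp
      qed
      also have "\<dots> = ?P * (\<Sum>c\<in>{0..<Suc r}. basis_e r (kf c) (Suc a))"
        by (simp only: sum_distrib_left atLeast0LessThan)
      also have "(\<Sum>c\<in>{0..<Suc r}. basis_e r (kf c) (Suc a)) = (\<Sum>i\<in>{0..r}. basis_e r i (Suc a))"
        using sum.reindex_bij_betw[OF bij, of "\<lambda>i. basis_e r i (Suc a)"] by simp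
      also have "\<dots> = 0" using basis_sum[OF a] .
      finally show "(\<Sum>c<Suc r. topm r kf lcf a c * Lp r lcf c) = 0" by simp
    next
      have "(\<Sum>c<Suc r. ?y c * Lp r lcf c) = ?y b * Lp r lcf b + ?y r * Lp r lcf r"
        by (rule sum_two) (use False b in auto)
      also have "\<dots> = 0" using False by simp
      finally show "(\<Sum>c<Suc r. ?y c * Lp r lcf c) = 0" .
    qed
    with e have "Lp r lcf r * (cc r kf lcf b * Lp r lcf b) = Lp r lcf b * (cc r kf lcf r * Lp r lcf r)"
      using Cf_fact b by simp
    then have "(Lp r lcf r * Lp r lcf b) * cc r kf lcf b = (Lp r lcf r * Lp r lcf b) * cc r kf lcf r"
      by (simp add: algebra_simps)
    then show ?thesis using Lnz by simp
  qed
  have "det (Mt r kf lcf y) = (\<Sum>b<Suc r. y b * Cf r kf lcf b)" by (rule det_Mt)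
  also have "\<dots> = (\<Sum>b<Suc r. cc r kf lcf r * (y b * Lp r lcf b))"
  proof (rule sum.cong[OF refl])
    fix b assume "b \<in> {..<Suc r}"
    then have "b < Suc r" by simp
    from Cf_fact[OF this, of kf lcf] ccr[OF this]
    show "y b * Cf r kf lcf b = cc r kf lcf r * (y b * Lp r lcf b)" by simp
  qed
  also have "\<dots> = cc r kf lcf r * (\<Sum>b<Suc r. y b * Lp r lcf b)"
    by (simp only: sum_distrib_left)
  finally show ?thesis .
qed

definition kap :: "nat \<Rightarrow> nat \<Rightarrow> nat" where
  "kap i1 a = (if Suc a = i1 then 0 else Suc a)"

lemma Emat_kap_entry: "x < r \<Longrightarrow> a < r \<Longrightarrow>
  Emat r (kap i1) $$ (x,a) = (if Suc a = i1 then -1 else if x = a then 1 else 0)"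
  by (auto simp: Emat_def kap_def basis_e_def)

lemma Emat_kap_sq: "Emat r (kap i1) * Emat r (kap i1) = 1\<^sub>m r"
proof (rule eq_matI)
  fix x y assume "x < dim_row (1\<^sub>m r :: int mat)" "y < dim_col (1\<^sub>m r :: int mat)"
  then have x: "x < r" and y: "y < r" by auto
  let ?E = "Emat r (kap i1)"
  have "(?E * ?E) $$ (x,y) = (\<Sum>a<r. ?E $$ (x,a) * ?E $$ (a,y))"
    using x y by (simp add: Emat_def scalar_prod_def atLeast0LessThan)
  also have "\<dots> = (if x = y then 1 else 0)"
  proof (cases "Suc y = i1")
    case True
    then have "(\<Sum>a<r. ?E $$ (x,a) * ?E $$ (a,y)) = (\<Sum>a<r. - ?E $$ (x,a))"
      using y by (intro sum.cong) (auto simp: Emat_kap_entry)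
    also have "\<dots> = (if x = y then 1 else 0)"
    proof (cases "x = y")
      case True
      then have "(\<Sum>a<r. - ?E $$ (x,a)) = (\<Sum>a<r. if a = y then 1 else 0)"
        using x \<open>Suc y = i1\<close> by (intro sum.cong) (auto simp: Emat_kap_entry)
      then show ?thesis using y True by simp
    next
      case False
      have "(\<Sum>a<r. - ?E $$ (x,a)) = - ?E $$ (x,y) + - ?E $$ (x,x)"
        by (rule sum_two) (use False x y \<open>Suc y = i1\<close> in \<open>auto simp: Emat_kap_entry\<close>)
      then show ?thesis using False x y \<open>Suc y = i1\<close> by (simp add: Emat_kap_entry)
    qed
    finally show ?thesis .
  next
    case False
    then have "(\<Sum>a<r. ?E $$ (x,a) * ?E $$ (a,y)) = (\<Sum>a<r. if a = y then ?E $$ (x,y) else 0)"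
      using y by (intro sum.cong) (auto simp: Emat_kap_entry)
    also have "\<dots> = (if x = y then 1 else 0)" using x y False by (simp add: Emat_kap_entry)
    finally show ?thesis .
  qed
  finally show "(?E * ?E) $$ (x,y) = 1\<^sub>m r $$ (x,y)" using x y by simp
qed (auto simp: Emat_def)

lemma det_Emat_kap: "det (Emat r (kap i1)) = 1 \<or> det (Emat r (kap i1)) = -1"
proof -
  have c: "Emat r (kap i1) \<in> carrier_mat r r" by (simp add: Emat_def)
  have "det (Emat r (kap i1)) * det (Emat r (kap i1)) = 1"
    using det_mult[OF c c] Emat_kap_sq by simp
  then show ?thesis using zmult_eq_1_iff by blast
qed



definition blk :: "col \<Rightarrow> nat" where "blk c = (case c of V i j \<Rightarrow> i | _ \<Rightarrow> 0)"
definition lcol :: "(nat \<Rightarrow> nat \<Rightarrow> int) \<Rightarrow> col \<Rightarrow> int" where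
  "lcol l c = (case c of V i j \<Rightarrow> l i j | _ \<Rightarrow> 0)"
definition jcol :: "col \<Rightarrow> nat" where "jcol c = (case c of V i j \<Rightarrow> j | _ \<Rightarrow> 0)"

definition Af :: "nat \<Rightarrow> (nat \<Rightarrow> nat \<Rightarrow> int) \<Rightarrow> (nat \<Rightarrow> nat \<Rightarrow> int) \<Rightarrow> (nat \<Rightarrow> col) \<Rightarrow> int mat" where
  "Af r l d f = mat (r+1) (r+1) (\<lambda>(a, b). colvec r l d (f b) (a + 1))"

definition yv :: "nat \<Rightarrow> (nat \<Rightarrow> nat \<Rightarrow> int) \<Rightarrow> (nat \<Rightarrow> nat \<Rightarrow> int) \<Rightarrow> (nat \<Rightarrow> col) \<Rightarrow> nat \<Rightarrow> int" where
  "yv r l d f b = colvec r l d (f b) (Suc r)"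

lemma Af_Mt: "Af r l d f = Mt r (\<lambda>b. blk (f b)) (\<lambda>b. lcol l (f b)) (yv r l d f)"
proof (rule eq_matI)
  fix a b assume a: "a < dim_row (Mt r (\<lambda>b. blk (f b)) (\<lambda>b. lcol l (f b)) (yv r l d f))"
    and b: "b < dim_col (Mt r (\<lambda>b. blk (f b)) (\<lambda>b. lcol l (f b)) (yv r l d f))"
  then have a': "a < Suc r" and b': "b < Suc r" by (auto simp: Mt_def)
  show "Af r l d f $$ (a, b) = Mt r (\<lambda>b. blk (f b)) (\<lambda>b. lcol l (f b)) (yv r l d f) $$ (a, b)"
  proof (cases "a < r")
    case True
    then have "uvec r (Suc a) = 0" by (simp add: uvec_def)
    then show ?thesis using a' b' True
      by (cases "f b") (simp_all add: Af_def Mt_def topm_def colvec_def blk_def lcol_def)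
  next
    case False
    then have "a = r" using a' by simp
    then show ?thesis using a' b' by (simp add: Af_def Mt_def yv_def)
  qed
qed (auto simp: Af_def Mt_def)

lemma colvec_last_V: "i \<le> r \<Longrightarrow> colvec r l d (V i j) (Suc r) = d i j"
  by (simp add: colvec_def basis_e_def uvec_def)

lemma colvec_last_Up: "colvec r l d Up (Suc r) = 1"
  by (simp add: colvec_def uvec_def)

lemma colvec_last_Down: "colvec r l d Down (Suc r) = -1"
  by (simp add: colvec_def uvec_def)

lemma card_miss:
  assumes "finite T" "inj_on kf S" "kf ` S \<subseteq> T" "card T = Suc (card S)"
  shows "\<exists>i1\<in>T. bij_betw kf S (T - {i1})"
proof -
  have fS: "finite S" using assms by (metis card.infinite finite_imageD finite_subset nat.distinct(1) card_0_eq)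
  have cI: "card (kf ` S) = card S" using assms card_image by blast
  have "kf ` S \<noteq> T" using cI assms by auto
  then obtain i1 where i1: "i1 \<in> T" "i1 \<notin> kf ` S" using assms by blast
  have sub: "kf ` S \<subseteq> T - {i1}" using assms i1 by auto
  have "card (T - {i1}) = card S" using assms i1 by simp
  then have "kf ` S = T - {i1}" using card_subset_eq[OF _ sub] assms cI by simp
  then show ?thesis using i1 assms unfolding bij_betw_def by blast
qed

lemma R2:
  assumes "bij_betw kf S T" "\<And>b. b \<in> S \<Longrightarrow> jf b = j (kf b)"
  shows "(\<Prod>c\<in>S. l (kf c) (jf c)) = (\<Prod>i\<in>T. (l i (j i) :: int))"
proof -
  have "(\<Prod>i\<in>T. l i (j i)) = (\<Prod>c\<in>S. l (kf c) (j (kf c)))"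
    using prod.reindex_bij_betw[OF assms(1), of "\<lambda>i. l i (j i)"] by simp
  also have "\<dots> = (\<Prod>c\<in>S. l (kf c) (jf c))" using assms(2) by (intro prod.cong) auto
  finally show ?thesis by simp
qed

lemma bij_remove: "bij_betw kf S T \<Longrightarrow> b \<in> S \<Longrightarrow> bij_betw kf (S - {b}) (T - {kf b})"
  by (rule bij_betw_DiffI) (auto simp: bij_betw_def)

lemma R1:
  assumes "bij_betw kf S T" "\<And>b. b \<in> S \<Longrightarrow> jf b = j (kf b)"
  shows "(\<Sum>b\<in>S. d (kf b) (jf b) * (\<Prod>c\<in>S-{b}. l (kf c) (jf c))) =
         (\<Sum>i\<in>T. d i (j i) * (\<Prod>i'\<in>T-{i}. (l i' (j i') :: int)))"
proof -
  have "(\<Sum>i\<in>T. d i (j i) * (\<Prod>i'\<in>T-{i}. l i' (j i'))) =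
        (\<Sum>b\<in>S. d (kf b) (j (kf b)) * (\<Prod>i'\<in>T-{kf b}. l i' (j i')))"
    using sum.reindex_bij_betw[OF assms(1), of "\<lambda>i. d i (j i) * (\<Prod>i'\<in>T-{i}. l i' (j i'))"] by simp
  also have "\<dots> = (\<Sum>b\<in>S. d (kf b) (jf b) * (\<Prod>c\<in>S-{b}. l (kf c) (jf c)))"
  proof (rule sum.cong[OF refl])
    fix b assume b: "b \<in> S"
    have "(\<Prod>c\<in>S-{b}. l (kf c) (jf c)) = (\<Prod>i'\<in>T-{kf b}. l i' (j i'))"
      by (rule R2[OF bij_remove[OF assms(1) b]]) (use assms(2) in auto)
    then show "d (kf b) (j (kf b)) * (\<Prod>i'\<in>T-{kf b}. l i' (j i')) = d (kf b) (jf b) * (\<Prod>c\<in>S-{b}. l (kf c) (jf c))"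
      using assms(2)[OF b] by simp
  qed
  finally show ?thesis by simp
qed

definition mu :: "nat \<Rightarrow> (nat \<Rightarrow> nat \<Rightarrow> int) \<Rightarrow> (nat \<Rightarrow> nat \<Rightarrow> int) \<Rightarrow> (nat \<Rightarrow> nat) \<Rightarrow> int" where
  "mu r l d j = (\<Sum>i0\<in>{0..r}. d i0 (j i0) * (\<Prod>i\<in>{0..r} - {i0}. l i (j i)))"

lemma mu_hat_mu: "mu_hat r n l d = mu r l d n" by (simp add: mu_hat_def mu_def)

lemma mu_decomp:
  assumes "i0 \<le> r"
  shows "mu r l d j = d i0 (j i0) * (\<Prod>i\<in>{0..r}-{i0}. l i (j i)) +
     l i0 (j i0) * (\<Sum>i\<in>{0..r}-{i0}. d i (j i) * (\<Prod>i'\<in>{0..r}-{i,i0}. l i' (j i')))"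
proof -
  have "mu r l d j = d i0 (j i0) * (\<Prod>i\<in>{0..r}-{i0}. l i (j i)) +
     (\<Sum>i\<in>{0..r}-{i0}. d i (j i) * (\<Prod>i'\<in>{0..r}-{i}. l i' (j i')))"
    unfolding mu_def using assms by (subst sum.remove[of _ i0]) auto
  also have "(\<Sum>i\<in>{0..r}-{i0}. d i (j i) * (\<Prod>i'\<in>{0..r}-{i}. l i' (j i'))) =
     (\<Sum>i\<in>{0..r}-{i0}. l i0 (j i0) * (d i (j i) * (\<Prod>i'\<in>{0..r}-{i,i0}. l i' (j i'))))"
  proof (rule sum.cong[OF refl])
    fix i assume i: "i \<in> {0..r}-{i0}"
    have "(\<Prod>i'\<in>{0..r}-{i}. l i' (j i')) = l i0 (j i0) * (\<Prod>i'\<in>{0..r}-{i}-{i0}. l i' (j i'))"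
      using i assms by (subst prod.remove[of _ i0]) auto
    also have "{0..r}-{i}-{i0} = {0..r}-{i,i0}" by auto
    finally show "d i (j i) * (\<Prod>i'\<in>{0..r}-{i}. l i' (j i')) = l i0 (j i0) * (d i (j i) * (\<Prod>i'\<in>{0..r}-{i,i0}. l i' (j i')))"
      by simp
  qed
  finally show ?thesis by (simp add: sum_distrib_left)
qed

lemma dvd_abs_mult: "(g::int) dvd \<bar>x\<bar> * P \<Longrightarrow> g dvd x * P"
proof -
  assume h: "g dvd \<bar>x\<bar> * P"
  have "x * P = sgn x * (\<bar>x\<bar> * P)" by (simp only: mult.assoc[symmetric] sgn_mult_abs)
  then show ?thesis using h by (metis dvd_mult)
qed

lemma memEE:
  assumes "i0 \<le> r" "i1 \<le> r" "i0 \<noteq> i1" "\<forall>i\<in>{0..r}-{i1}. 1 \<le> j i \<and> j i \<le> n i"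
  shows "Gcd (M'_set EE r n l d) dvd nu_hat n l d i0 (j i0) * (\<Prod>i\<in>{0..r}-{i0,i1}. l i (j i))"
proof -
  have "\<bar>nu_hat n l d i0 (j i0)\<bar> * (\<Prod>i\<in>{0..r}-{i0,i1}. l i (j i)) \<in> M'_set EE r n l d"
  proof -
    have "\<exists>i0' i1' j'. \<bar>nu_hat n l d i0 (j i0)\<bar> * (\<Prod>i\<in>{0..r}-{i0,i1}. l i (j i)) =
        \<bar>nu_hat n l d i0' (j' i0')\<bar> * (\<Prod>i\<in>{0..r}-{i0',i1'}. l i (j' i)) \<and>
        i0' \<le> r \<and> i1' \<le> r \<and> i0' \<noteq> i1' \<and> (\<forall>i\<in>{0..r}-{i1'}. 1 \<le> j' i \<and> j' i \<le> n i)"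
      using assms by blast
    then show ?thesis unfolding M'_set_def by simp
  qed
  then show ?thesis by (rule dvd_abs_mult[OF Gcd_dvd])
qed

lemma memMu: "Gcd (M'_set EE r n l d) dvd mu_hat r n l d"
proof -
  have "\<bar>mu_hat r n l d\<bar> \<in> M'_set EE r n l d" unfolding M'_set_def by auto
  then show ?thesis using Gcd_dvd dvd_abs_iff by blast
qed

lemma valid_bezout:
  assumes "valid_data r n l d" "i \<le> r"
  shows "\<exists>u v. u * l i (n i) + v * d i (n i) = 1"
proof -
  have "gcd (l i (n i)) (d i (n i)) = 1" using assms unfolding valid_data_def by auto
  then show ?thesis using bezout_int[of "l i (n i)" "d i (n i)"] by auto
qed

lemma alg_mu: "(u::int)*(lj*(dn*Q + lnn*S) - (lj*dn - lnn*dj)*Q) + v*(dj*(dn*Q+lnn*S) + (lj*dn - lnn*dj)*S) = (u*lnn + v*dn)*(dj*Q + lj*S)"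
  by (simp add: algebra_simps)


lemma nu_prod_dvd:
  assumes vd: "valid_data r n l d" and "i0 \<le> r" "i1 \<le> r" "i0 \<noteq> i1"
    and jb: "\<forall>i\<in>{0..r}-{i0,i1}. 1 \<le> j i \<and> j i \<le> n i"
    and "1 \<le> j1" "j1 \<le> n i0" "1 \<le> j2" "j2 \<le> n i0"
  shows "Gcd (M'_set EE r n l d) dvd (d i0 j1 * l i0 j2 - d i0 j2 * l i0 j1) * (\<Prod>i\<in>{0..r}-{i0,i1}. l i (j i))"
proof -
  let ?g = "Gcd (M'_set EE r n l d)"
  let ?P = "\<Prod>i\<in>{0..r}-{i0,i1}. l i (j i)"
  have P1: "(\<Prod>i\<in>{0..r}-{i0,i1}. l i ((j(i0 := j1)) i)) = ?P" by (rule prod.cong) auto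
  have P2: "(\<Prod>i\<in>{0..r}-{i0,i1}. l i ((j(i0 := j2)) i)) = ?P" by (rule prod.cong) auto
  have N1: "?g dvd nu_hat n l d i0 j1 * ?P"
    using memEE[OF assms(2,3,4), of "j(i0 := j1)" n l d] assms P1 by auto
  have N2: "?g dvd nu_hat n l d i0 j2 * ?P"
    using memEE[OF assms(2,3,4), of "j(i0 := j2)" n l d] assms P2 by auto
  obtain u v where uv: "u * l i0 (n i0) + v * d i0 (n i0) = 1" using valid_bezout[OF vd assms(2)] by blast
  let ?X = "d i0 j1 * l i0 j2 - d i0 j2 * l i0 j1"
  have "?X * ?P = - u * (l i0 j2 * (nu_hat n l d i0 j1 * ?P) - l i0 j1 * (nu_hat n l d i0 j2 * ?P))
      - v * (d i0 j2 * (nu_hat n l d i0 j1 * ?P) - d i0 j1 * (nu_hat n l d i0 j2 * ?P))"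
  proof -
    have "- u * (l i0 j2 * (nu_hat n l d i0 j1 * ?P) - l i0 j1 * (nu_hat n l d i0 j2 * ?P))
      - v * (d i0 j2 * (nu_hat n l d i0 j1 * ?P) - d i0 j1 * (nu_hat n l d i0 j2 * ?P))
      = (u * l i0 (n i0) + v * d i0 (n i0)) * (?X * ?P)"
      unfolding nu_hat_def by (simp add: algebra_simps)
    then show ?thesis using uv by simp
  qed
  then show ?thesis using N1 N2 by (simp add: dvd_diff dvd_mult)
qed


lemma mu_cong: "(\<And>i. i \<le> r \<Longrightarrow> j i = j' i) \<Longrightarrow> mu r l d j = mu r l d j'"
  unfolding mu_def by (intro sum.cong prod.cong) auto

lemma mu_dvd:
  assumes vd: "valid_data r n l d" and jb: "\<forall>i\<le>r. 1 \<le> j i \<and> j i \<le> n i"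
  shows "Gcd (M'_set EE r n l d) dvd mu r l d j"
proof -
  let ?g = "Gcd (M'_set EE r n l d)"
  let ?J = "\<lambda>m i. if i < m then j i else n i"
  have r1: "r \<ge> 1" using vd unfolding valid_data_def by simp
  have nb: "\<forall>i\<le>r. 1 \<le> n i" using vd unfolding valid_data_def by simp
  have all: "?g dvd mu r l d (?J m)" for m
  proof (induction m)
    case 0
    then show ?case using memMu mu_hat_mu by simp
  next
    case (Suc m)
    show ?case
    proof (cases "m \<le> r")
      case False
      have "mu r l d (?J (Suc m)) = mu r l d (?J m)" using False by (intro mu_cong) auto
      then show ?thesis using Suc by simp
    next
      case mr: True
      let ?J1 = "?J m" and ?J2 = "?J (Suc m)"
      let ?Q = "\<Prod>i\<in>{0..r}-{m}. l i (?J2 i)"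
      let ?S = "\<Sum>i\<in>{0..r}-{m}. d i (?J2 i) * (\<Prod>i'\<in>{0..r}-{i,m}. l i' (?J2 i'))"
      have Q1: "(\<Prod>i\<in>{0..r}-{m}. l i (?J1 i)) = ?Q" by (rule prod.cong) auto
      have S1: "(\<Sum>i\<in>{0..r}-{m}. d i (?J1 i) * (\<Prod>i'\<in>{0..r}-{i,m}. l i' (?J1 i'))) = ?S"
        by (intro sum.cong arg_cong2[where f = "(*)"] prod.cong) auto
      have e1: "mu r l d ?J1 = d m (n m) * ?Q + l m (n m) * ?S"
        using mu_decomp[OF mr, of l d ?J1] Q1 S1 by simp
      have e2: "mu r l d ?J2 = d m (j m) * ?Q + l m (j m) * ?S"
        using mu_decomp[OF mr, of l d ?J2] by simp
      obtain u v where uv: "u * l m (n m) + v * d m (n m) = 1" using valid_bezout[OF vd mr] by blast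
      let ?nu = "nu_hat n l d m (j m)"
      have key: "mu r l d ?J2 = u * (l m (j m) * mu r l d ?J1 - ?nu * ?Q) + v * (d m (j m) * mu r l d ?J1 + ?nu * ?S)"
      proof -
        have "u * (l m (j m) * mu r l d ?J1 - ?nu * ?Q) + v * (d m (j m) * mu r l d ?J1 + ?nu * ?S)
            = (u * l m (n m) + v * d m (n m)) * (d m (j m) * ?Q + l m (j m) * ?S)"
          unfolding e1 nu_hat_def by (rule alg_mu)
        then show ?thesis using uv e2 by simp
      qed
      define i1 where "i1 = (if m = 0 then 1 else (0::nat))"
      have i1: "i1 \<le> r" "i1 \<noteq> m" using r1 by (auto simp: i1_def)
      have J2b: "\<forall>i\<in>{0..r}-{i1}. 1 \<le> ?J2 i \<and> ?J2 i \<le> n i" using jb nb by auto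
      have "?Q = l i1 (?J2 i1) * (\<Prod>i\<in>{0..r}-{m}-{i1}. l i (?J2 i))"
        using i1 by (subst prod.remove[of _ i1]) auto
      also have "{0..r}-{m}-{i1} = {0..r}-{m,i1}" by auto
      finally have Qe: "?Q = l i1 (?J2 i1) * (\<Prod>i\<in>{0..r}-{m,i1}. l i (?J2 i))" .
      have "?g dvd ?nu * (\<Prod>i\<in>{0..r}-{m,i1}. l i (?J2 i))"
        using memEE[OF mr i1(1) i1(2)[symmetric] J2b] by simp
      then have dQ: "?g dvd ?nu * ?Q" unfolding Qe by (simp add: dvd_mult mult.left_commute)
      have "?nu * ?S = (\<Sum>i\<in>{0..r}-{m}. d i (?J2 i) * (?nu * (\<Prod>i'\<in>{0..r}-{m,i}. l i' (?J2 i'))))"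
        by (simp add: sum_distrib_left algebra_simps insert_commute)
      also have "?g dvd \<dots>"
      proof (rule dvd_sum)
        fix i assume i: "i \<in> {0..r}-{m}"
        have "\<forall>i'\<in>{0..r}-{i}. 1 \<le> ?J2 i' \<and> ?J2 i' \<le> n i'" using jb nb by auto
        then have "?g dvd nu_hat n l d m (?J2 m) * (\<Prod>i'\<in>{0..r}-{m,i}. l i' (?J2 i'))"
          using i mr by (intro memEE) auto
        then show "?g dvd d i (?J2 i) * (?nu * (\<Prod>i'\<in>{0..r}-{m,i}. l i' (?J2 i')))"
          by (simp add: dvd_mult)
      qed
      finally have dS: "?g dvd ?nu * ?S" .
      have A1: "?g dvd u * (l m (j m) * mu r l d ?J1 - ?nu * ?Q)"
        by (rule dvd_mult, rule dvd_diff, rule dvd_mult[OF Suc.IH], rule dQ)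
      have A2: "?g dvd v * (d m (j m) * mu r l d ?J1 + ?nu * ?S)"
        by (rule dvd_mult, rule dvd_add, rule dvd_mult[OF Suc.IH], rule dS)
      show ?thesis unfolding key by (rule dvd_add[OF A1 A2])
    qed
  qed
  have "mu r l d (?J (Suc r)) = mu r l d j" by (rule mu_cong) auto
  with all[of "Suc r"] show ?thesis by simp
qed



lemma vcolD:
  assumes "c \<in> vcols r n"
  shows "c = V (blk c) (jcol c)" "blk c \<le> r" "1 \<le> jcol c" "jcol c \<le> n (blk c)"
    "lcol l c = l (blk c) (jcol c)"
  using assms by (auto simp: vcols_def blk_def jcol_def lcol_def)

lemma cols_sub: "cols t r n \<subseteq> vcols r n \<union> {Up, Down}"
  by (cases t) (auto simp: cols_def)

lemma lcol_nonV: "c \<in> {Up, Down} \<Longrightarrow> lcol l c = 0"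
  by (auto simp: lcol_def)

lemma vd_l_pos: "valid_data r n l d \<Longrightarrow> i \<le> r \<Longrightarrow> 1 \<le> j \<Longrightarrow> j \<le> n i \<Longrightarrow> l i j \<ge> 1"
  unfolding valid_data_def by blast

lemma card_r: "b < Suc r \<Longrightarrow> card ({0..<Suc r} - {b}) = r"
  by simp

lemma dirB_EE:
  assumes vd: "valid_data r n l d" and inj: "inj_on f {0..<Suc r}" and sub: "f ` {0..<Suc r} \<subseteq> vcols r n"
  shows "Gcd (M'_set EE r n l d) dvd det (Af r l d f)"
proof -
  let ?g = "Gcd (M'_set EE r n l d)"
  define kf where "kf = (\<lambda>b. blk (f b))"
  define lcf where "lcf = (\<lambda>b. lcol l (f b))"
  define jf where "jf = (\<lambda>b. jcol (f b))"
  let ?y = "yv r l d f"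
  have fv: "f b \<in> vcols r n" if "b < Suc r" for b using sub that by auto
  have kb: "kf b \<le> r" "1 \<le> jf b" "jf b \<le> n (kf b)" and lc: "lcf b = l (kf b) (jf b)"
    if "b < Suc r" for b using vcolD[OF fv[OF that]] unfolding kf_def jf_def lcf_def by auto
  have nz: "lcf c \<noteq> 0" if "c < Suc r" for c
    using vd_l_pos[OF vd kb[OF that]] lc[OF that] by simp
  have yb: "?y b = d (kf b) (jf b)" if "b < Suc r" for b
    using vcolD(1)[OF fv[OF that]] colvec_last_V[OF kb(1)[OF that]]
    unfolding yv_def kf_def jf_def by metis
  have detA: "det (Af r l d f) = det (Mt r kf lcf ?y)" unfolding Af_Mt kf_def lcf_def ..
  have kfT: "kf ` S \<subseteq> {0..r}" if "S \<subseteq> {0..<Suc r}" for S using kb that by auto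
  show ?thesis
  proof (cases "inj_on kf {0..<Suc r}")
    case True
    have "kf ` {0..<Suc r} = {0..r}"
      using card_subset_eq[OF _ kfT[OF subset_refl]] card_image[OF True] by simp
    then have bij: "bij_betw kf {0..<Suc r} {0..r}" using True by (simp add: bij_betw_def)
    define J where "J = (\<lambda>i. jf (inv_into {0..<Suc r} kf i))"
    have JJ: "jf b = J (kf b)" if "b \<in> {0..<Suc r}" for b
      unfolding J_def using inv_into_f_f[OF True that] by simp
    have "(\<Sum>b<Suc r. ?y b * Lp r lcf b) =
        (\<Sum>b\<in>{0..<Suc r}. d (kf b) (jf b) * (\<Prod>c\<in>{0..<Suc r}-{b}. l (kf c) (jf c)))"
      unfolding atLeast0LessThan[symmetric] Lp_def
      by (intro sum.cong refl arg_cong2[where f = "(*)"] prod.cong) (auto simp: yb lc)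
    also have "\<dots> = mu r l d J" unfolding mu_def by (rule R1[where jf=jf and j=J, OF bij JJ])
    finally have e: "(\<Sum>b<Suc r. ?y b * Lp r lcf b) = mu r l d J" .
    have Jb: "\<forall>i\<le>r. 1 \<le> J i \<and> J i \<le> n i"
    proof (intro allI impI)
      fix i assume ir: "i \<le> r"
      then have "i \<in> kf ` {0..<Suc r}" using bij unfolding bij_betw_def by auto
      then obtain b where b: "b \<in> {0..<Suc r}" "i = kf b" by blast
      then show "1 \<le> J i \<and> J i \<le> n i" using JJ[OF b(1)] kb[of b] by auto
    qed
    have "?g dvd mu r l d J" by (rule mu_dvd[OF vd Jb])
    moreover have "det (Mt r kf lcf ?y) = cc r kf lcf r * (\<Sum>b<Suc r. ?y b * Lp r lcf b)"
      by (rule det_casei[OF bij]) (rule nz)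
    ultimately show ?thesis unfolding detA e by simp
  next
    case False
    then obtain b1 b2 where b12: "b1 \<in> {0..<Suc r}" "b2 \<in> {0..<Suc r}" "b1 \<noteq> b2" "kf b1 = kf b2"
      unfolding inj_on_def by blast
    let ?R = "\<Prod>c\<in>{0..<Suc r}-{b1,b2}. lcf c"
    have dete: "det (Af r l d f) = cc r kf lcf b1 * ?R * (?y b1 * lcf b2 - ?y b2 * lcf b1)"
      unfolding detA using b12 by (intro det_caseii nz) auto
    let ?S1 = "{0..<Suc r}-{b1}"
    show ?thesis
    proof (cases "inj_on kf ?S1")
      case True
      have "card {0..r} = Suc (card ?S1)" using b12 by simp
      then obtain i1 where i1: "i1 \<in> {0..r}" "bij_betw kf ?S1 ({0..r}-{i1})"
        using card_miss[OF _ True kfT] by auto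
      define i0 where "i0 = kf b1"
      have i0: "i0 \<le> r" "i0 \<noteq> i1" using b12 i1 unfolding i0_def bij_betw_def by auto
      have bij2: "bij_betw kf (?S1 - {b2}) ({0..r}-{i1}-{i0})"
        using bij_remove[OF i1(2), of b2] b12 unfolding i0_def by auto
      have e1: "?S1 - {b2} = {0..<Suc r}-{b1,b2}" by auto
      have e2: "{0..r}-{i1}-{i0} = {0..r}-{i0,i1}" by auto
      have bij3: "bij_betw kf ({0..<Suc r}-{b1,b2}) ({0..r}-{i0,i1})" using bij2 e1 e2 by simp
      define J where "J = (\<lambda>i. jf (inv_into ({0..<Suc r}-{b1,b2}) kf i))"
      have JJ: "jf b = J (kf b)" if "b \<in> {0..<Suc r}-{b1,b2}" for b
        unfolding J_def using inv_into_f_f[OF bij_betw_imp_inj_on[OF bij3] that] by simp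
      have Re: "?R = (\<Prod>i\<in>{0..r}-{i0,i1}. l i (J i))"
      proof -
        have "?R = (\<Prod>c\<in>{0..<Suc r}-{b1,b2}. l (kf c) (jf c))" by (rule prod.cong) (auto simp: lc)
        also have "\<dots> = (\<Prod>i\<in>{0..r}-{i0,i1}. l i (J i))" by (rule R2[where jf=jf and j=J, OF bij3 JJ])
        finally show ?thesis .
      qed
      have Jb: "\<forall>i\<in>{0..r}-{i0,i1}. 1 \<le> J i \<and> J i \<le> n i"
      proof
        fix i assume "i \<in> {0..r}-{i0,i1}"
        then have "i \<in> kf ` ({0..<Suc r}-{b1,b2})" using bij3 unfolding bij_betw_def by simp
        then obtain b where b: "b \<in> {0..<Suc r}-{b1,b2}" "i = kf b" by blast
        then show "1 \<le> J i \<and> J i \<le> n i" using JJ[OF b(1)] kb[of b] by auto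
      qed
      have X: "?y b1 * lcf b2 - ?y b2 * lcf b1 = d i0 (jf b1) * l i0 (jf b2) - d i0 (jf b2) * l i0 (jf b1)"
        using b12 yb lc unfolding i0_def by auto
      have "?g dvd (d i0 (jf b1) * l i0 (jf b2) - d i0 (jf b2) * l i0 (jf b1)) * (\<Prod>i\<in>{0..r}-{i0,i1}. l i (J i))"
        by (rule nu_prod_dvd[OF vd i0(1) _ i0(2) Jb]) (use i1 b12 kb[of b1] kb[of b2] in \<open>simp_all add: i0_def\<close>)
      then show ?thesis unfolding dete X Re by (simp add: dvd_mult mult.commute mult.left_commute)
    next
      case False
      then obtain b3 b4 where b34: "b3 \<in> ?S1" "b4 \<in> ?S1" "b3 \<noteq> b4" "kf b3 = kf b4"
        unfolding inj_on_def by blast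
      have "Cf r kf lcf b1 = 0" using b34 b12 by (intro Cf_zero_dup[of b3 b4]) auto
      then have "cc r kf lcf b1 * Lp r lcf b1 = 0" using Cf_fact[of b1 r kf lcf] b12 by simp
      then have "cc r kf lcf b1 = 0" using Lp_nonzero[of r lcf b1] nz by auto
      then show ?thesis unfolding dete by simp
    qed
  qed
qed

lemma dirB_P:
  assumes tn: "t \<noteq> EE" and vd: "valid_data r n l d" and inj: "inj_on f {0..<Suc r}"
    and sub: "f ` {0..<Suc r} \<subseteq> cols t r n"
  shows "Gcd (M'_set t r n l d) dvd det (Af r l d f)"
proof -
  let ?g = "Gcd (M'_set t r n l d)"
  define kf where "kf = (\<lambda>b. blk (f b))"
  define lcf where "lcf = (\<lambda>b. lcol l (f b))"
  define jf where "jf = (\<lambda>b. jcol (f b))"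
  let ?y = "yv r l d f"
  have detA: "det (Af r l d f) = det (Mt r kf lcf ?y)" unfolding Af_Mt kf_def lcf_def ..
  have fc: "f b \<in> vcols r n \<or> f b \<in> {Up, Down}" if "b < Suc r" for b using sub cols_sub that by fastforce
  have "?g dvd Cf r kf lcf b" if b: "b < Suc r" for b
  proof (cases "\<exists>c<Suc r. c \<noteq> b \<and> f c \<notin> vcols r n")
    case True
    then obtain c where c: "c < Suc r" "c \<noteq> b" "f c \<in> {Up, Down}" using fc by blast
    have "lcf c = 0" unfolding lcf_def by (rule lcol_nonV[OF c(3)])
    then have "Lp r lcf b = 0" using Lp_zero c by metis
    then show ?thesis using Cf_fact[OF b] by simp
  next
    case False
    let ?S = "{0..<Suc r}-{b}"
    have fv: "f c \<in> vcols r n" if "c \<in> ?S" for c using False that by auto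
    have kb: "kf c \<le> r" "1 \<le> jf c" "jf c \<le> n (kf c)" and lc: "lcf c = l (kf c) (jf c)"
      if "c \<in> ?S" for c using vcolD[OF fv[OF that]] unfolding kf_def jf_def lcf_def by auto
    show ?thesis
    proof (cases "inj_on kf ?S")
      case True
      have cS: "card {0..r} = Suc (card ?S)" using b by simp
      have iS: "kf ` ?S \<subseteq> {0..r}"
      proof (rule image_subsetI)
        fix x assume "x \<in> ?S"
        then show "kf x \<in> {0..r}" using kb(1)[of x] by simp
      qed
      obtain i1 where i1: "i1 \<in> {0..r}" "bij_betw kf ?S ({0..r}-{i1})"
        using card_miss[OF finite_atLeastAtMost True iS cS] by blast
      define J where "J = (\<lambda>i. jf (inv_into ?S kf i))"
      have JJ: "jf c = J (kf c)" if "c \<in> ?S" for c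
        unfolding J_def using inv_into_f_f[OF True that] by simp
      have Le: "Lp r lcf b = (\<Prod>i\<in>{0..r}-{i1}. l i (J i))"
      proof -
        have "Lp r lcf b = (\<Prod>c\<in>?S. l (kf c) (jf c))" unfolding Lp_def by (rule prod.cong) (auto simp: lc)
        also have "\<dots> = (\<Prod>i\<in>{0..r}-{i1}. l i (J i))" by (rule R2[where jf=jf and j=J, OF i1(2) JJ])
        finally show ?thesis .
      qed
      have Jb: "\<forall>i\<in>{0..r}-{i1}. 1 \<le> J i \<and> J i \<le> n i"
      proof
        fix i assume "i \<in> {0..r}-{i1}"
        then have "i \<in> kf ` ?S" using i1(2) unfolding bij_betw_def by simp
        then obtain c where c: "c \<in> ?S" "i = kf c" by blast
        then show "1 \<le> J i \<and> J i \<le> n i" using JJ[OF c(1)] kb[of c] by auto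
      qed
      have "(\<Prod>i\<in>{0..r}-{i1}. l i (J i)) \<in> M'_set t r n l d"
        unfolding M'_set_def using tn i1(1) Jb by auto
      then have "?g dvd Lp r lcf b" unfolding Le by (rule Gcd_dvd)
      then show ?thesis using Cf_fact[OF b] by simp
    next
      case False
      then obtain b3 b4 where b34: "b3 \<in> ?S" "b4 \<in> ?S" "b3 \<noteq> b4" "kf b3 = kf b4"
        unfolding inj_on_def by blast
      have "Cf r kf lcf b = 0" using b34 b by (intro Cf_zero_dup[of b3 b4]) auto
      then show ?thesis by simp
    qed
  qed
  then show ?thesis unfolding detA det_Mt
    by (intro dvd_sum) (simp add: dvd_mult)
qed



lemma kap_lt: "a < r \<Longrightarrow> kap i1 a \<le> r" "kap i1 a \<noteq> i1"
  by (auto simp: kap_def)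

lemma kap_inj: "inj_on (kap i1) A"
  unfolding inj_on_def kap_def by auto

lemma kap_bij: assumes "i1 \<le> r" shows "bij_betw (kap i1) {0..<r} ({0..r}-{i1})"
proof -
  have "kap i1 ` {0..<r} = {0..r}-{i1}"
  proof
    show "kap i1 ` {0..<r} \<subseteq> {0..r}-{i1}" using kap_lt by fastforce
  next
    show "{0..r}-{i1} \<subseteq> kap i1 ` {0..<r}"
    proof
      fix i assume i: "i \<in> {0..r}-{i1}"
      show "i \<in> kap i1 ` {0..<r}"
      proof (cases "i = 0")
        case True
        then have "i1 - 1 < r" "kap i1 (i1 - 1) = i" using i assms by (auto simp: kap_def)
        then show ?thesis by force
      next
        case False
        then have "i - 1 < r" "kap i1 (i - 1) = i" using i by (auto simp: kap_def)
        then show ?thesis by force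
      qed
    qed
  qed
  then show ?thesis using kap_inj unfolding bij_betw_def by blast
qed

lemma Emat_cong: "(\<And>c. c < r \<Longrightarrow> kf c = kf' c) \<Longrightarrow> Emat r kf = Emat r kf'"
  by (rule eq_matI) (auto simp: Emat_def)

lemma cc_abs: "(\<And>c. c < r \<Longrightarrow> kf c = kap i1 c) \<Longrightarrow> \<bar>cc r kf lcf r\<bar> = 1"
  using cc_last[of r kf lcf] Emat_cong[of r kf "kap i1"] det_Emat_kap[of r i1] by auto

lemma minors_mem:
  "f ` {0..<r+1} \<subseteq> cols t r n \<Longrightarrow> inj_on f {0..<r+1} \<Longrightarrow> \<bar>det (Af r l d f)\<bar> \<in> minors_abs t r n l d"
  unfolding minors_abs_def Af_def by blast

lemma dirA_mu:
  assumes vd: "valid_data r n l d"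
  shows "Gcd (minors_abs EE r n l d) dvd \<bar>mu_hat r n l d\<bar>"
proof -
  define kk where "kk = (\<lambda>b. if b < r then Suc b else (0::nat))"
  define f where "f = (\<lambda>b. V (kk b) (n (kk b)))"
  have nb: "\<forall>i\<le>r. 1 \<le> n i" using vd unfolding valid_data_def by simp
  have kkr: "kk b \<le> r" if "b < Suc r" for b using that by (auto simp: kk_def)
  have injk: "inj_on kk {0..<Suc r}" unfolding inj_on_def kk_def by auto
  have "kk ` {0..<Suc r} = {0..r}"
  proof
    show "kk ` {0..<Suc r} \<subseteq> {0..r}" using kkr by auto
  next
    show "{0..r} \<subseteq> kk ` {0..<Suc r}"
    proof
      fix i assume i: "i \<in> {0..r}"
      show "i \<in> kk ` {0..<Suc r}"
      proof (cases "i = 0")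
        case True
        then have "kk r = i" by (simp add: kk_def)
        then show ?thesis by force
      next
        case False
        then have "kk (i - 1) = i" "i - 1 < Suc r" using i by (auto simp: kk_def)
        then show ?thesis by force
      qed
    qed
  qed
  then have bij: "bij_betw kk {0..<Suc r} {0..r}" using injk by (simp add: bij_betw_def)
  have injf: "inj_on f {0..<Suc r}" using injk unfolding inj_on_def f_def by auto
  have subf: "f ` {0..<Suc r} \<subseteq> cols EE r n"
    using kkr nb by (auto simp: f_def cols_def vcols_def)
  let ?lcf = "\<lambda>b. lcol l (f b)"
  have lc: "?lcf b = l (kk b) (n (kk b))" for b by (simp add: f_def lcol_def)
  have kf: "(\<lambda>b. blk (f b)) = kk" by (simp add: f_def blk_def)
  have yb: "yv r l d f b = d (kk b) (n (kk b))" if "b < Suc r" for b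
    using colvec_last_V[OF kkr[OF that]] by (simp add: yv_def f_def)
  have nz: "?lcf c \<noteq> 0" if "c < Suc r" for c
    using vd_l_pos[OF vd kkr[OF that], of "n (kk c)"] nb kkr[OF that] lc by auto
  have "det (Af r l d f) = det (Mt r kk ?lcf (yv r l d f))" unfolding Af_Mt kf ..
  also have "\<dots> = cc r kk ?lcf r * (\<Sum>b<Suc r. yv r l d f b * Lp r ?lcf b)"
    by (rule det_casei[OF bij]) (rule nz)
  also have "(\<Sum>b<Suc r. yv r l d f b * Lp r ?lcf b) =
        (\<Sum>b\<in>{0..<Suc r}. d (kk b) (n (kk b)) * (\<Prod>c\<in>{0..<Suc r}-{b}. l (kk c) (n (kk c))))"
    unfolding atLeast0LessThan[symmetric] Lp_def
    by (intro sum.cong refl arg_cong2[where f = "(*)"] prod.cong) (auto simp: yb lc)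
  also have "\<dots> = mu_hat r n l d" unfolding mu_hat_def
    by (rule R1[where jf = "\<lambda>b. n (kk b)" and j = n, OF bij]) simp
  finally have e: "det (Af r l d f) = cc r kk ?lcf r * mu_hat r n l d" .
  have "\<bar>cc r kk ?lcf r\<bar> = 1" by (rule cc_abs[of r kk 0]) (simp add: kk_def kap_def)
  then have "\<bar>det (Af r l d f)\<bar> = \<bar>mu_hat r n l d\<bar>" unfolding e abs_mult by simp
  moreover have "\<bar>det (Af r l d f)\<bar> \<in> minors_abs EE r n l d" using minors_mem injf subf by simp
  ultimately show ?thesis by (metis Gcd_dvd)
qed

lemma kap_pre: assumes "i1 \<le> r" "i0 \<le> r" "i0 \<noteq> i1"
  shows "\<exists>p<r. kap i1 p = i0"
proof -
  have "i0 \<in> kap i1 ` {0..<r}" using kap_bij[OF assms(1)] assms unfolding bij_betw_def by auto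
  then show ?thesis by auto
qed

lemma dirA_nu:
  assumes vd: "valid_data r n l d" and i: "i0 \<le> r" "i1 \<le> r" "i0 \<noteq> i1"
    and jb: "\<forall>i\<in>{0..r}-{i1}. 1 \<le> j i \<and> j i \<le> n i"
  shows "Gcd (minors_abs EE r n l d) dvd \<bar>nu_hat n l d i0 (j i0)\<bar> * (\<Prod>i\<in>{0..r}-{i0,i1}. l i (j i))"
proof (cases "j i0 = n i0")
  case True
  then show ?thesis by (simp add: nu_hat_def)
next
  case jn: False
  obtain p where p: "p < r" "kap i1 p = i0" using kap_pre[OF i(2,1,3)] by blast
  define kk where "kk = (\<lambda>b. if b < r then kap i1 b else i0)"
  define jj where "jj = (\<lambda>b. if b < r then j (kap i1 b) else n i0)"
  define f where "f = (\<lambda>b. V (kk b) (jj b))"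
  have nb: "\<forall>i\<le>r. 1 \<le> n i" using vd unfolding valid_data_def by simp
  have kkr: "kk b \<le> r" "1 \<le> jj b" "jj b \<le> n (kk b)" if "b < Suc r" for b
    using that kap_lt(1)[of b r i1] kap_lt(2)[of i1 b] jb nb i by (auto simp: kk_def jj_def)
  have injf: "inj_on f {0..<Suc r}"
  proof (rule inj_onI)
    fix a b assume a: "a \<in> {0..<Suc r}" and b: "b \<in> {0..<Suc r}" and e: "f a = f b"
    then have e1: "kk a = kk b" and e2: "jj a = jj b" by (auto simp: f_def)
    show "a = b"
    proof (cases "a < r \<and> b < r")
      case True
      then show ?thesis using e1 kap_inj[of i1 "{0..<r}"] unfolding kk_def inj_on_def by auto
    next
      case False
      show ?thesis
      proof (rule ccontr)
        assume ab: "a \<noteq> b"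
        have "(a < r \<and> b = r) \<or> (b < r \<and> a = r)" using False ab a b by auto
        then show False
        proof
          assume h: "a < r \<and> b = r"
          then have "kap i1 a = i0" using e1 by (simp add: kk_def)
          then have "a = p" using p kap_inj[of i1 "{0..<r}"] h unfolding inj_on_def by auto
          then show False using e2 h p jn by (simp add: jj_def)
        next
          assume h: "b < r \<and> a = r"
          then have "kap i1 b = i0" using e1 by (simp add: kk_def)
          then have "b = p" using p kap_inj[of i1 "{0..<r}"] h unfolding inj_on_def by auto
          then show False using e2 h p jn by (simp add: jj_def)
        qed
      qed
    qed
  qed
  have subf: "f ` {0..<Suc r} \<subseteq> cols EE r n"
    using kkr by (force simp: f_def cols_def vcols_def)
  let ?lcf = "\<lambda>b. lcol l (f b)"
  have lc: "?lcf b = l (kk b) (jj b)" for b by (simp add: f_def lcol_def)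
  have kf: "(\<lambda>b. blk (f b)) = kk" by (simp add: f_def blk_def)
  have yb: "yv r l d f b = d (kk b) (jj b)" if "b < Suc r" for b
    using colvec_last_V[OF kkr(1)[OF that]] by (simp add: yv_def f_def)
  have nz: "?lcf c \<noteq> 0" if "c < Suc r" for c
    using vd_l_pos[OF vd kkr[OF that]] lc by auto
  let ?R = "\<Prod>c\<in>{0..<Suc r}-{r,p}. ?lcf c"
  have "det (Af r l d f) = det (Mt r kk ?lcf (yv r l d f))" unfolding Af_Mt kf ..
  also have "\<dots> = cc r kk ?lcf r * ?R * (yv r l d f r * ?lcf p - yv r l d f p * ?lcf r)"
    by (rule det_caseii) (use p nz in \<open>auto simp: kk_def\<close>)
  also have "yv r l d f r * ?lcf p - yv r l d f p * ?lcf r = nu_hat n l d i0 (j i0)"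
    using p by (simp add: yb lc kk_def jj_def nu_hat_def)
  also have "?R = (\<Prod>i\<in>{0..r}-{i0,i1}. l i (j i))"
  proof -
    have b1: "bij_betw (kap i1) ({0..<r}-{p}) ({0..r}-{i1}-{i0})"
      using bij_remove[OF kap_bij[OF i(2)], of p] p by simp
    have s1: "{0..<r}-{p} = {0..<Suc r}-{r,p}" by auto
    have s2: "{0..r}-{i1}-{i0} = {0..r}-{i0,i1}" by auto
    have b2: "bij_betw kk ({0..<Suc r}-{r,p}) ({0..r}-{i0,i1})"
      using b1 unfolding s1 s2 by (rule bij_betw_cong[THEN iffD1, rotated]) (auto simp: kk_def)
    have "?R = (\<Prod>c\<in>{0..<Suc r}-{r,p}. l (kk c) (jj c))" by (rule prod.cong) (auto simp: lc)
    also have "\<dots> = (\<Prod>i\<in>{0..r}-{i0,i1}. l i (j i))"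
      by (rule R2[where jf = jj and j = j, OF b2]) (auto simp: kk_def jj_def)
    finally show ?thesis .
  qed
  finally have e: "det (Af r l d f) = cc r kk ?lcf r * (\<Prod>i\<in>{0..r}-{i0,i1}. l i (j i)) * nu_hat n l d i0 (j i0)" .
  have "\<bar>cc r kk ?lcf r\<bar> = 1" by (rule cc_abs[of r kk i1]) (simp add: kk_def)
  moreover have "(\<Prod>i\<in>{0..r}-{i0,i1}. l i (j i)) \<ge> 0"
    using jb vd_l_pos[OF vd] by (intro prod_nonneg) (smt (verit) Diff_iff atLeastAtMost_iff insertCI)
  ultimately have "\<bar>det (Af r l d f)\<bar> = \<bar>nu_hat n l d i0 (j i0)\<bar> * (\<Prod>i\<in>{0..r}-{i0,i1}. l i (j i))"
    unfolding e abs_mult by simp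
  moreover have "\<bar>det (Af r l d f)\<bar> \<in> minors_abs EE r n l d" using minors_mem injf subf by simp
  ultimately show ?thesis by (metis Gcd_dvd)
qed

lemma dirA_P:
  assumes tn: "t \<noteq> EE" and vd: "valid_data r n l d" and i: "i1 \<le> r"
    and jb: "\<forall>i\<in>{0..r}-{i1}. 1 \<le> j i \<and> j i \<le> n i"
  shows "Gcd (minors_abs t r n l d) dvd (\<Prod>i\<in>{0..r}-{i1}. l i (j i))"
proof -
  define U where "U = (if t = EP then Down else Up)"
  have U: "U \<in> cols t r n" "U \<in> {Up, Down}" using tn by (cases t; auto simp: U_def cols_def)+
  define f where "f = (\<lambda>b. if b < r then V (kap i1 b) (j (kap i1 b)) else U)"
  have injf: "inj_on f {0..<Suc r}"
  proof (rule inj_onI)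
    fix a b assume a: "a \<in> {0..<Suc r}" and b: "b \<in> {0..<Suc r}" and e: "f a = f b"
    show "a = b"
    proof (cases "a < r \<and> b < r")
      case True
      then have "kap i1 a = kap i1 b" using e by (simp add: f_def)
      then show ?thesis using kap_inj[of i1 UNIV] unfolding inj_on_def by auto
    next
      case False
      then show ?thesis using e a b U(2) by (auto simp: f_def split: if_splits)
    qed
  qed
  have subf: "f ` {0..<Suc r} \<subseteq> cols t r n"
  proof
    fix x assume "x \<in> f ` {0..<Suc r}"
    then obtain b where b: "b < Suc r" "x = f b" by auto
    show "x \<in> cols t r n"
    proof (cases "b < r")
      case True
      then have "x \<in> vcols r n" using b kap_lt(1)[of b r i1] kap_lt(2)[of i1 b] jb by (auto simp: f_def vcols_def)
      then show ?thesis by (cases t) (auto simp: cols_def)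
    next
      case False
      then show ?thesis using b U by (simp add: f_def)
    qed
  qed
  let ?kf = "\<lambda>b. blk (f b)" and ?lcf = "\<lambda>b. lcol l (f b)"
  have lr: "?lcf r = 0" using U(2) by (auto simp: f_def lcol_def)
  have yr: "\<bar>yv r l d f r\<bar> = 1" using U(2) by (auto simp: f_def yv_def colvec_last_Up colvec_last_Down)
  have "det (Af r l d f) = (\<Sum>b<Suc r. yv r l d f b * Cf r ?kf ?lcf b)" unfolding Af_Mt by (rule det_Mt)
  also have "\<dots> = yv r l d f r * Cf r ?kf ?lcf r"
  proof -
    have "Cf r ?kf ?lcf b = 0" if "b < r" for b
      using Cf_fact[of b r ?kf ?lcf] Lp_zero[of r r b ?lcf, OF _ _ lr] that by simp
    then show ?thesis by simp
  qed
  also have "Cf r ?kf ?lcf r = cc r ?kf ?lcf r * Lp r ?lcf r" by (rule Cf_fact) simp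
  also have "Lp r ?lcf r = (\<Prod>i\<in>{0..r}-{i1}. l i (j i))"
  proof -
    have "Lp r ?lcf r = (\<Prod>c\<in>{0..<r}. l (kap i1 c) (j (kap i1 c)))"
      unfolding Lp_def by (rule prod.cong) (auto simp: f_def lcol_def)
    also have "\<dots> = (\<Prod>i\<in>{0..r}-{i1}. l i (j i))"
      by (rule R2[where jf = "\<lambda>c. j (kap i1 c)" and j = j, OF kap_bij[OF i]]) simp
    finally show ?thesis .
  qed
  finally have e: "det (Af r l d f) = yv r l d f r * (cc r ?kf ?lcf r * (\<Prod>i\<in>{0..r}-{i1}. l i (j i)))" .
  have "\<bar>cc r ?kf ?lcf r\<bar> = 1" by (rule cc_abs[of r _ i1]) (simp add: f_def blk_def)
  moreover have "(\<Prod>i\<in>{0..r}-{i1}. l i (j i)) \<ge> 0"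
    using jb vd_l_pos[OF vd] by (intro prod_nonneg) (smt (verit) Diff_iff atLeastAtMost_iff insertCI)
  ultimately have "\<bar>det (Af r l d f)\<bar> = (\<Prod>i\<in>{0..r}-{i1}. l i (j i))"
    unfolding e abs_mult using yr by simp
  moreover have "\<bar>det (Af r l d f)\<bar> \<in> minors_abs t r n l d" using minors_mem injf subf by simp
  ultimately show ?thesis by (metis Gcd_dvd)
qed



theorem proposition4p11:
  fixes t :: ptype and r :: nat and n :: "nat \<Rightarrow> nat" and l d :: "nat \<Rightarrow> nat \<Rightarrow> int"
  assumes "valid_data r n l d"
    and "defining_matrix t r n l d"
  shows "Gcd (minors_abs t r n l d) = Gcd (M'_set t r n l d)"
proof (rule associated_eqI)
  note vd = assms(1)
  show "Gcd (minors_abs t r n l d) dvd Gcd (M'_set t r n l d)"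
  proof (rule Gcd_greatest)
    fix m assume m: "m \<in> M'_set t r n l d"
    show "Gcd (minors_abs t r n l d) dvd m"
    proof (cases "t = EE")
      case True
      then have "m = \<bar>mu_hat r n l d\<bar> \<or> (\<exists>i0 i1 j. m = \<bar>nu_hat n l d i0 (j i0)\<bar> * (\<Prod>i\<in>{0..r} - {i0, i1}. l i (j i)) \<and>
         i0 \<le> r \<and> i1 \<le> r \<and> i0 \<noteq> i1 \<and> (\<forall>i\<in>{0..r} - {i1}. 1 \<le> j i \<and> j i \<le> n i))"
        using m unfolding M'_set_def by auto
      then show ?thesis
      proof
        assume "m = \<bar>mu_hat r n l d\<bar>"
        then show ?thesis using dirA_mu[OF vd] True by simp
      next
        assume "\<exists>i0 i1 j. m = \<bar>nu_hat n l d i0 (j i0)\<bar> * (\<Prod>i\<in>{0..r} - {i0, i1}. l i (j i)) \<and>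
         i0 \<le> r \<and> i1 \<le> r \<and> i0 \<noteq> i1 \<and> (\<forall>i\<in>{0..r} - {i1}. 1 \<le> j i \<and> j i \<le> n i)"
        then obtain i0 i1 j where h: "m = \<bar>nu_hat n l d i0 (j i0)\<bar> * (\<Prod>i\<in>{0..r} - {i0, i1}. l i (j i))"
          "i0 \<le> r" "i1 \<le> r" "i0 \<noteq> i1" "\<forall>i\<in>{0..r} - {i1}. 1 \<le> j i \<and> j i \<le> n i" by blast
        show ?thesis unfolding h(1) True by (rule dirA_nu[OF vd h(2-5)])
      qed
    next
      case False
      then obtain i1 j where h: "m = (\<Prod>i\<in>{0..r} - {i1}. l i (j i))" "i1 \<le> r"
        "\<forall>i\<in>{0..r} - {i1}. 1 \<le> j i \<and> j i \<le> n i"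
        using m unfolding M'_set_def by auto
      show ?thesis unfolding h(1) by (rule dirA_P[OF False vd h(2,3)])
    qed
  qed
next
  note vd = assms(1)
  show "Gcd (M'_set t r n l d) dvd Gcd (minors_abs t r n l d)"
  proof (rule Gcd_greatest)
    fix m assume m: "m \<in> minors_abs t r n l d"
    then obtain f where h: "m = \<bar>det (Af r l d f)\<bar>" "f ` {0..<Suc r} \<subseteq> cols t r n" "inj_on f {0..<Suc r}"
      unfolding minors_abs_def Af_def by auto
    have "Gcd (M'_set t r n l d) dvd det (Af r l d f)"
    proof (cases "t = EE")
      case True
      then show ?thesis using dirB_EE[OF vd h(3)] h(2) by (simp add: cols_def)
    next
      case False
      then show ?thesis using dirB_P[OF False vd h(3,2)] by simp
    qed
    then show "Gcd (M'_set t r n l d) dvd m" unfolding h(1) by simp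
  qed
qed simp_all


end
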